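(* Let $\gamma(t)=(t,t^2,t^3)$ be the moment curve in $\mathbb{R}^3$ and let $H_2,H_3\subset\mathbb{R}^3$ be two orthogonal affine planes. Then it is not possible that both $H_2$ and $H_3$ each contain at least three distinct points of $\{\gamma(t):t>0\}$.
   Context: Two affine planes are orthogonal if their normal vectors are orthogonal. *)

theory Defs
  imports "HOL-Analysis.Analysis"
begin

definition moment_curve :: "real \<Rightarrow> real^3" where
  "moment_curve t = vector [t, t^2, t^3]"

definition affine_plane :: "(real^3) set \<Rightarrow> bool" where
  "affine_plane H \<longleftrightarrow> (\<exists>n c. n \<noteq> 0 \<and> H = {x. n \<bullet> x = c})"

definition orthogonal_planes :: "(real^3) set \<Rightarrow> (real^3) set \<Rightarrow> bool" where
  "orthogonal_planes H1 H2 \<longleftrightarrow>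
     (\<exists>n1 c1 n2 c2. n1 \<noteq> 0 \<and> n2 \<noteq> 0 \<and> H1 = {x. n1 \<bullet> x = c1} \<and> H2 = {x. n2 \<bullet> x = c2}
        \<and> n1 \<bullet> n2 = 0)"

end

theory Submission
  imports Defs
begin

lemma mc_inner: "n \<bullet> moment_curve t = n$1 * t + n$2 * t^2 + n$3 * t^3"
  unfolding moment_curve_def inner_vec_def by (simp add: sum_3 vector_3 mult.commute)

lemma key:
  fixes p q r d a b c :: real
  assumes "a \<noteq> b" "a \<noteq> c" "b \<noteq> c"
    and ea: "p*a + q*a^2 + r*a^3 = d" and eb: "p*b + q*b^2 + r*b^3 = d"
    and ec: "p*c + q*c^2 + r*c^3 = d"
  shows "q = - r*(a+b+c) \<and> p = r*(a*b+b*c+c*a)"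
proof -
  have "(a-b)*(p + q*(a+b) + r*(a^2+a*b+b^2)) = 0"
    using ea eb by (simp add: algebra_simps power2_eq_square power3_eq_cube)
  hence 1: "p + q*(a+b) + r*(a^2+a*b+b^2) = 0" using assms by simp
  have "(a-c)*(p + q*(a+c) + r*(a^2+a*c+c^2)) = 0"
    using ea ec by (simp add: algebra_simps power2_eq_square power3_eq_cube)
  hence 2: "p + q*(a+c) + r*(a^2+a*c+c^2) = 0" using assms by simp
  have "(b-c)*(q + r*(a+b+c)) = 0"
    using 1 2 by (simp add: algebra_simps power2_eq_square)
  hence "q + r*(a+b+c) = 0" using assms by simp
  hence 3: "q = - r*(a+b+c)" by linarith
  have "p = r*(a*b+b*c+c*a)" using 1 3 by (simp add: algebra_simps power2_eq_square)
  thus ?thesis using 3 by simp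
qed

lemma normal_form:
  fixes n :: "real^3"
  assumes "n \<noteq> 0" "0 < a" "0 < b" "0 < c" "a \<noteq> b" "a \<noteq> c" "b \<noteq> c"
    "n \<bullet> moment_curve a = d" "n \<bullet> moment_curve b = d" "n \<bullet> moment_curve c = d"
  shows "\<exists>e1 e2. e1 > 0 \<and> e2 > 0 \<and> n$3 \<noteq> 0 \<and> n$2 = - n$3 * e1 \<and> n$1 = n$3 * e2"
proof -
  from key[of a b c "n$1" "n$2" "n$3" d] assms
  have k: "n$2 = - n$3*(a+b+c) \<and> n$1 = n$3*(a*b+b*c+c*a)" by (simp add: mc_inner)
  have "n$3 \<noteq> 0"
  proof
    assume h: "n$3 = 0"
    hence "n$1 = 0" "n$2 = 0" using k by auto
    hence "n = 0" using h by (simp add: vec_eq_iff forall_3)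
    thus False using assms by simp
  qed
  thus ?thesis using k assms
    by (intro exI[of _ "a+b+c"] exI[of _ "a*b+b*c+c*a"]) (simp add: add_pos_pos)
qed

theorem mainTheorem4:
  fixes H2 H3 :: "(real^3) set"
  assumes "affine_plane H2" and "affine_plane H3"
    and "orthogonal_planes H2 H3"
  shows "\<not> ((\<exists>a b c. 0 < a \<and> 0 < b \<and> 0 < c \<and> a \<noteq> b \<and> a \<noteq> c \<and> b \<noteq> c \<and>
               moment_curve a \<in> H2 \<and> moment_curve b \<in> H2 \<and> moment_curve c \<in> H2) \<and>
             (\<exists>a b c. 0 < a \<and> 0 < b \<and> 0 < c \<and> a \<noteq> b \<and> a \<noteq> c \<and> b \<noteq> c \<and>
               moment_curve a \<in> H3 \<and> moment_curve b \<in> H3 \<and> moment_curve c \<in> H3))"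
proof
  assume h: "(\<exists>a b c. 0 < a \<and> 0 < b \<and> 0 < c \<and> a \<noteq> b \<and> a \<noteq> c \<and> b \<noteq> c \<and>
               moment_curve a \<in> H2 \<and> moment_curve b \<in> H2 \<and> moment_curve c \<in> H2) \<and>
             (\<exists>a b c. 0 < a \<and> 0 < b \<and> 0 < c \<and> a \<noteq> b \<and> a \<noteq> c \<and> b \<noteq> c \<and>
               moment_curve a \<in> H3 \<and> moment_curve b \<in> H3 \<and> moment_curve c \<in> H3)"
  obtain n m d1 d2 where nm: "n \<noteq> 0" "m \<noteq> 0" "H2 = {x. n \<bullet> x = d1}" "H3 = {x. m \<bullet> x = d2}"
    "n \<bullet> m = 0" using assms(3) unfolding orthogonal_planes_def by blast
  from h obtain a b c where abc: "0 < a" "0 < b" "0 < c" "a \<noteq> b" "a \<noteq> c" "b \<noteq> c"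
    "moment_curve a \<in> H2" "moment_curve b \<in> H2" "moment_curve c \<in> H2" by blast
  from h obtain a' b' c' where abc': "0 < a'" "0 < b'" "0 < c'" "a' \<noteq> b'" "a' \<noteq> c'" "b' \<noteq> c'"
    "moment_curve a' \<in> H3" "moment_curve b' \<in> H3" "moment_curve c' \<in> H3" by blast
  obtain e1 e2 where E: "e1 > 0" "e2 > 0" "n$3 \<noteq> 0" "n$2 = - n$3 * e1" "n$1 = n$3 * e2"
    using normal_form[of n a b c d1] abc nm by auto
  obtain f1 f2 where F: "f1 > 0" "f2 > 0" "m$3 \<noteq> 0" "m$2 = - m$3 * f1" "m$1 = m$3 * f2"
    using normal_form[of m a' b' c' d2] abc' nm by auto
  have "n \<bullet> m = n$3 * m$3 * (e2*f2 + e1*f1 + 1)"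
    unfolding inner_vec_def using E F by (simp add: sum_3 algebra_simps)
  moreover have "e2*f2 + e1*f1 + 1 > 0" using E F by (simp add: add_pos_pos)
  ultimately show False using nm E F by simp
qed

end
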